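(* Let $\mathbb{X}$ be an infinite-dimensional (real or complex) Banach space and let $\mathcal{B}=(\mathbf{e}_n)_{n=1}^\infty$ be a semi-normalized basis of $\mathbb{X}$ with $C_w=1$, i.e. $\|\mathcal{G}_N(x)\|\le\|x\|$ for every $x\in\mathbb{X}$, every $N\in\mathbb{N}$ and every choice of greedy set $\Lambda_N(x)$. Then $C_t=1$, i.e. $\|x-\mathcal{G}_N(x)\|\le\|x\|$ for all such $x$, $N$, $\Lambda_N(x)$; in particular $\mathcal{B}$ is $1$-quasi-greedy.
   Context: A basis $(\mathbf{e}_n)_{n=1}^\infty$ is a Schauder basis; semi-normalized means $0<\inf_n\|\mathbf{e}_n\|\le\sup_n\|\mathbf{e}_n\|<\infty$. Let $(\mathbf{e}_n^* )$ be the biorthogonal functionals. For $x\in\mathbb{X}$ and $N\in\mathbb{N}$, a greedy set $\Lambda_N(x)$ is any set of $N$ indices with $\min\{|\mathbf{e}_j^*(x)|: j\in\Lambda_N(x)\}\ge\max\{|\mathbf{e}_j^*(x)|: j\notin\Lambda_N(x)\}$, and $\mathcal{G}_N(x)=\sum_{j\in\Lambda_N(x)}\mathbf{e}_j^*(x)\mathbf{e}_j$. $C_w$ is the smallest constant $C$ with $\|\mathcal{G}_N(x)\|\le C\|x\|$ for all $x,N$ and choices of greedy sets; $C_t$ is the smallest $\tilde C$ with $\|x-\mathcal{G}_N(x)\|\le\tilde C\|x\|$ for all $x,N$ and choices of greedy sets. The quasi-greedy constant is $C_{qg}=\max\{C_w,C_t\}$, and the basis is $1$-quasi-greedy if $C_{qg}\le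 1$. *)

theory Defs
  imports "HOL-Analysis.Analysis"
begin

text \<open>Scalar multiplication by a normed field 'k (used with 'k = real or 'k = complex)
  on a real normed space, compatible with the real structure and with the norm.\<close>
definition scalar_action :: "('k::real_normed_field \<Rightarrow> 'a::real_normed_vector \<Rightarrow> 'a) \<Rightarrow> bool" where
  "scalar_action sc \<longleftrightarrow>
     (\<forall>a b x. sc (a + b) x = sc a x + sc b x) \<and>
     (\<forall>a x y. sc a (x + y) = sc a x + sc a y) \<and>
     (\<forall>a b x. sc (a * b) x = sc a (sc b x)) \<and>
     (\<forall>x. sc 1 x = x) \<and>
     (\<forall>r x. sc (of_real r) x = scaleR r x) \<and>
     (\<forall>a x. norm (sc a x) = norm a * norm x)"

definition schauder_basis :: "('k::real_normed_field \<Rightarrow> 'a::real_normed_vector \<Rightarrow> 'a) \<Rightarrow> (nat \<Rightarrow> 'a) \<Rightarrow> bool" where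
  "schauder_basis sc e \<longleftrightarrow>
     (\<forall>x. \<exists>!a. (\<lambda>N. \<Sum>n<N. sc (a n) (e n)) \<longlonglongrightarrow> x)"

definition basis_coeff :: "('k::real_normed_field \<Rightarrow> 'a::real_normed_vector \<Rightarrow> 'a) \<Rightarrow> (nat \<Rightarrow> 'a) \<Rightarrow> 'a \<Rightarrow> nat \<Rightarrow> 'k" where
  "basis_coeff sc e x = (THE a. (\<lambda>N. \<Sum>n<N. sc (a n) (e n)) \<longlonglongrightarrow> x)"

definition semi_normalized :: "(nat \<Rightarrow> 'a::real_normed_vector) \<Rightarrow> bool" where
  "semi_normalized e \<longleftrightarrow> (\<exists>c C. 0 < c \<and> (\<forall>n. c \<le> norm (e n) \<and> norm (e n) \<le> C))"

definition greedy_set :: "('k::real_normed_field \<Rightarrow> 'a::real_normed_vector \<Rightarrow> 'a) \<Rightarrow> (nat \<Rightarrow> 'a) \<Rightarrow> 'a \<Rightarrow> nat \<Rightarrow> nat set \<Rightarrow> bool" where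
  "greedy_set sc e x N A \<longleftrightarrow> finite A \<and> card A = N \<and>
     (\<forall>j\<in>A. \<forall>k. k \<notin> A \<longrightarrow> norm (basis_coeff sc e x k) \<le> norm (basis_coeff sc e x j))"

definition greedy_sum :: "('k::real_normed_field \<Rightarrow> 'a::real_normed_vector \<Rightarrow> 'a) \<Rightarrow> (nat \<Rightarrow> 'a) \<Rightarrow> 'a \<Rightarrow> nat set \<Rightarrow> 'a" where
  "greedy_sum sc e x A = (\<Sum>j\<in>A. sc (basis_coeff sc e x j) (e j))"

end

theory Submission
  imports Defs
begin

lemma sa_zero:
  assumes "scalar_action sc" shows "sc 0 x = 0"
proof -
  have "sc (of_real 0) x = scaleR 0 x" using assms unfolding scalar_action_def by blast
  then show ?thesis by simp
qed

lemma sa_ofreal: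
  assumes "scalar_action sc" shows "sc (of_real r * a) x = scaleR r (sc a x)"
proof -
  have "sc (of_real r * a) x = sc (of_real r) (sc a x)" using assms unfolding scalar_action_def by blast
  also have "\<dots> = scaleR r (sc a x)" using assms unfolding scalar_action_def by blast
  finally show ?thesis .
qed

lemma sa_norm:
  assumes "scalar_action sc" shows "norm (sc a x) = norm a * norm x"
  using assms unfolding scalar_action_def by blast

lemma coeff_eq:
  assumes sb: "schauder_basis sc e"
    and lim: "(\<lambda>N. \<Sum>n<N. sc (a n) (e n)) \<longlonglongrightarrow> z"
  shows "basis_coeff sc e z = a"
proof -
  have "\<exists>!a. (\<lambda>N. \<Sum>n<N. sc (a n) (e n)) \<longlonglongrightarrow> z" using sb unfolding schauder_basis_def by blast
  then show ?thesis unfolding basis_coeff_def using lim the1_equality[of "\<lambda>a. (\<lambda>N. \<Sum>n<N. sc (a n) (e n)) \<longlonglongrightarrow> z"] by blast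
qed

lemma coeff_conv:
  assumes sb: "schauder_basis sc e"
  shows "(\<lambda>N. \<Sum>n<N. sc (basis_coeff sc e x n) (e n)) \<longlonglongrightarrow> x"
proof -
  have "\<exists>!a. (\<lambda>N. \<Sum>n<N. sc (a n) (e n)) \<longlonglongrightarrow> x" using sb unfolding schauder_basis_def by blast
  then show ?thesis unfolding basis_coeff_def by (rule theI')
qed

lemma coeff_bounded:
  assumes sa: "scalar_action sc" and sb: "schauder_basis sc e" and sn: "semi_normalized e"
  shows "\<exists>M>0. \<forall>k. norm (basis_coeff sc e x k) \<le> M"
proof -
  define c where "c = basis_coeff sc e x"
  define S where "S = (\<lambda>N. \<Sum>n<N. sc (c n) (e n))"
  have "convergent S" using coeff_conv[OF sb, of x] unfolding S_def c_def convergent_def by blast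
  then have "Bseq S" by (rule convergent_imp_Bseq)
  then obtain B where B: "B > 0" "\<forall>n. norm (S n) \<le> B" by (rule BseqE)
  obtain cc CC where cc: "0 < cc" "\<forall>n. cc \<le> norm (e n) \<and> norm (e n) \<le> CC"
    using sn unfolding semi_normalized_def by blast
  have "norm (c k) \<le> 2 * B / cc" for k
  proof -
    have "sc (c k) (e k) = S (Suc k) - S k" unfolding S_def by simp
    then have "norm (sc (c k) (e k)) \<le> 2 * B"
      using B norm_triangle_ineq4[of "S (Suc k)" "S k"] by (smt (verit))
    then have "norm (c k) * norm (e k) \<le> 2 * B" using sa_norm[OF sa] by metis
    moreover have "norm (c k) * cc \<le> norm (c k) * norm (e k)"
      using cc by (simp add: mult_left_mono)
    ultimately have "norm (c k) * cc \<le> 2 * B" by linarith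
    then show ?thesis using cc by (simp add: field_simps)
  qed
  then show ?thesis using B cc unfolding c_def
    by (intro exI[of _ "2 * B / cc"]) auto
qed

lemma key:
  fixes sc :: "'k::real_normed_field \<Rightarrow> 'a::real_normed_vector \<Rightarrow> 'a"
  assumes sa: "scalar_action sc" and sb: "schauder_basis sc e" and sn: "semi_normalized e"
    and hyp: "\<forall>x N A. greedy_set sc e x N A \<longrightarrow> norm (greedy_sum sc e x A) \<le> norm x"
  shows "norm (\<Sum>j\<in>{j. j < m \<and> j \<notin> A}. sc (basis_coeff sc e x j) (e j)) \<le> norm x"
proof -
  define c where "c = basis_coeff sc e x"
  define F where "F = {j. j < m \<and> j \<notin> A \<and> c j \<noteq> 0}"
  define v where "v = (\<Sum>j\<in>F. sc (c j) (e j))"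
  have finF: "finite F" unfolding F_def by simp
  have vv: "(\<Sum>j\<in>{j. j < m \<and> j \<notin> A}. sc (c j) (e j)) = v"
    unfolding v_def
    by (rule sum.mono_neutral_right) (auto simp: F_def sa_zero[OF sa])
  have "norm v \<le> norm x"
  proof (cases "F = {}")
    case True then show ?thesis by (simp add: v_def)
  next
    case False
    obtain M where M: "M > 0" "\<forall>k. norm (c k) \<le> M"
      using coeff_bounded[OF sa sb sn, of x] unfolding c_def by blast
    define m0 where "m0 = Min ((\<lambda>j. norm (c j)) ` F)"
    have m0le: "m0 \<le> norm (c j)" if "j \<in> F" for j
      unfolding m0_def using finF that by simp
    have m0pos: "m0 > 0"
      unfolding m0_def using finF False by (subst Min_gr_iff) (auto simp: F_def)
    define d where "d = min 1 (m0 / M)"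
    have d: "0 < d" "d \<le> 1" "d * M \<le> m0"
      using m0pos M unfolding d_def by (auto simp: field_simps min_def)
    define a where "a = (\<lambda>k. if k \<in> F then c k else of_real d * c k)"
    define y where "y = scaleR d x + scaleR (1 - d) v"
    have trm: "sc (a n) (e n) = scaleR d (sc (c n) (e n)) + (if n \<in> F then scaleR (1 - d) (sc (c n) (e n)) else 0)" for n
    proof (cases "n \<in> F")
      case True
      then show ?thesis by (simp add: a_def scaleR_left_distrib[symmetric])
    next
      case False
      then show ?thesis using sa_ofreal[OF sa, of d "c n" "e n"] by (simp add: a_def)
    qed
    have Fsub: "F \<subseteq> {..<m}" unfolding F_def by auto
    have sumeq: "(\<Sum>n<N. sc (a n) (e n)) = scaleR d (\<Sum>n<N. sc (c n) (e n)) + scaleR (1 - d) v"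
      if "N \<ge> m" for N
    proof -
      have "(\<Sum>n<N. sc (a n) (e n)) = scaleR d (\<Sum>n<N. sc (c n) (e n)) +
              (\<Sum>n<N. if n \<in> F then scaleR (1 - d) (sc (c n) (e n)) else 0)"
        unfolding trm by (simp add: sum.distrib scaleR_sum_right)
      also have "(\<Sum>n<N. if n \<in> F then scaleR (1 - d) (sc (c n) (e n)) else 0)
          = (\<Sum>n\<in>{..<N} \<inter> F. scaleR (1 - d) (sc (c n) (e n)))"
        by (simp add: sum.inter_restrict)
      also have "{..<N} \<inter> F = F" using Fsub that by auto
      finally show ?thesis by (simp add: v_def scaleR_sum_right)
    qed
    have lim: "(\<lambda>N. \<Sum>n<N. sc (a n) (e n)) \<longlonglongrightarrow> y"
    proof -
      have "(\<lambda>N. scaleR d (\<Sum>n<N. sc (c n) (e n)) + scaleR (1 - d) v) \<longlonglongrightarrow> y"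
        unfolding y_def using coeff_conv[OF sb, of x] unfolding c_def
        by (intro tendsto_intros)
      moreover have "eventually (\<lambda>N. scaleR d (\<Sum>n<N. sc (c n) (e n)) + scaleR (1 - d) v
             = (\<Sum>n<N. sc (a n) (e n))) sequentially"
        unfolding eventually_sequentially by (intro exI[of _ m] allI impI) (simp add: sumeq)
      ultimately show ?thesis by (rule Lim_transform_eventually)
    qed
    have ca: "basis_coeff sc e y = a" by (rule coeff_eq[OF sb lim])
    have gs: "greedy_set sc e y (card F) F"
      unfolding greedy_set_def ca
    proof (intro conjI ballI allI impI finF refl)
      fix j k assume j: "j \<in> F" and k: "k \<notin> F"
      have "norm (a k) = d * norm (c k)" using k d by (simp add: a_def norm_mult)
      also have "\<dots> \<le> d * M" using M d by (simp add: mult_left_mono)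
      also have "\<dots> \<le> m0" by (rule d(3))
      also have "\<dots> \<le> norm (a j)" using m0le[OF j] j by (simp add: a_def)
      finally show "norm (a k) \<le> norm (a j)" .
    qed
    have "greedy_sum sc e y F = v"
      unfolding greedy_sum_def ca v_def by (rule sum.cong) (auto simp: a_def)
    then have "norm v \<le> norm y" using hyp gs by metis
    also have "\<dots> \<le> d * norm x + (1 - d) * norm v"
      unfolding y_def using d norm_triangle_ineq[of "scaleR d x" "scaleR (1 - d) v"] by simp
    finally have "d * norm v \<le> d * norm x" by (simp add: algebra_simps)
    then show ?thesis using d by simp
  qed
  then show ?thesis using vv unfolding c_def by simp
qed

lemma main:
  fixes sc :: "'k::real_normed_field \<Rightarrow> 'a::real_normed_vector \<Rightarrow> 'a"
  assumes sa: "scalar_action sc" and sb: "schauder_basis sc e" and sn: "semi_normalized e"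
    and hyp: "\<forall>x N A. greedy_set sc e x N A \<longrightarrow> norm (greedy_sum sc e x A) \<le> norm x"
    and fA: "finite A"
  shows "norm (x - greedy_sum sc e x A) \<le> norm x"
proof -
  define c where "c = basis_coeff sc e x"
  obtain m1 where m1: "A \<subseteq> {..<m1}" using fA finite_nat_bounded by blast
  have eq: "(\<Sum>j\<in>{j. j < m \<and> j \<notin> A}. sc (c j) (e j)) = (\<Sum>n<m. sc (c n) (e n)) - greedy_sum sc e x A"
    if "m \<ge> m1" for m
  proof -
    have "{..<m} = {j. j < m \<and> j \<notin> A} \<union> A" using m1 that by auto
    then have "(\<Sum>n<m. sc (c n) (e n)) = (\<Sum>j\<in>{j. j < m \<and> j \<notin> A}. sc (c j) (e j)) + (\<Sum>j\<in>A. sc (c j) (e j))"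
      using fA by (simp add: sum.union_disjoint disjoint_iff)
    then show ?thesis unfolding greedy_sum_def c_def by simp
  qed
  have "(\<lambda>m. (\<Sum>n<m. sc (c n) (e n)) - greedy_sum sc e x A) \<longlonglongrightarrow> x - greedy_sum sc e x A"
    using coeff_conv[OF sb, of x] unfolding c_def by (intro tendsto_intros)
  moreover have "eventually (\<lambda>m. (\<Sum>n<m. sc (c n) (e n)) - greedy_sum sc e x A
       = (\<Sum>j\<in>{j. j < m \<and> j \<notin> A}. sc (c j) (e j))) sequentially"
    unfolding eventually_sequentially by (intro exI[of _ m1] allI impI) (simp add: eq)
  ultimately have lim: "(\<lambda>m. \<Sum>j\<in>{j. j < m \<and> j \<notin> A}. sc (c j) (e j)) \<longlonglongrightarrow> x - greedy_sum sc e x A"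
    by (rule Lim_transform_eventually)
  show ?thesis
    by (rule Lim_norm_ubound[OF _ lim]) (use key[OF sa sb sn hyp] in \<open>auto simp: c_def\<close>)
qed

lemma sa_real: "scalar_action (scaleR :: real \<Rightarrow> 'a::real_normed_vector \<Rightarrow> 'a)"
  unfolding scalar_action_def by (auto simp: scaleR_left_distrib scaleR_right_distrib)

theorem corollary2p2:
  shows "(\<forall>e :: nat \<Rightarrow> 'a::banach.
           schauder_basis scaleR e \<and> semi_normalized e \<and>
           (\<forall>x N A. greedy_set scaleR e x N A \<longrightarrow> norm (greedy_sum scaleR e x A) \<le> norm x)
           \<longrightarrow> (\<forall>x N A. greedy_set scaleR e x N A \<longrightarrow> norm (x - greedy_sum scaleR e x A) \<le> norm x)) \<and>
         (\<forall>(sc :: complex \<Rightarrow> 'b::banach \<Rightarrow> 'b) (e :: nat \<Rightarrow> 'b).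
           scalar_action sc \<and> schauder_basis sc e \<and> semi_normalized e \<and>
           (\<forall>x N A. greedy_set sc e x N A \<longrightarrow> norm (greedy_sum sc e x A) \<le> norm x)
           \<longrightarrow> (\<forall>x N A. greedy_set sc e x N A \<longrightarrow> norm (x - greedy_sum sc e x A) \<le> norm x))"
proof (intro conjI allI impI)
  fix e :: "nat \<Rightarrow> 'a" and x N A
  assume h: "schauder_basis scaleR e \<and> semi_normalized e \<and>
           (\<forall>x N A. greedy_set scaleR e x N A \<longrightarrow> norm (greedy_sum scaleR e x A) \<le> norm x)"
    and g: "greedy_set scaleR e x N A"
  then show "norm (x - greedy_sum scaleR e x A) \<le> norm x"
    using main[OF sa_real, of e A x] unfolding greedy_set_def by blast
next
  fix sc :: "complex \<Rightarrow> 'b \<Rightarrow> 'b" and e :: "nat \<Rightarrow> 'b" and x N A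
  assume h: "scalar_action sc \<and> schauder_basis sc e \<and> semi_normalized e \<and>
           (\<forall>x N A. greedy_set sc e x N A \<longrightarrow> norm (greedy_sum sc e x A) \<le> norm x)"
    and g: "greedy_set sc e x N A"
  then show "norm (x - greedy_sum sc e x A) \<le> norm x"
    using main[of sc e A x] unfolding greedy_set_def by blast
qed

end
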